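(* Let $(W_i',X_i',Y_i)'$, $i=1,2,\ldots$, be i.i.d. draws from a population $F_{W,X,Y}$, where $W$ is a $J\times 1$ vector of controls with support $\mathbb{W}$, $X$ is a $K\times1$ vector of policy variables, and $Y$ is a scalar outcome, with $\mathbb{E}[Y^2\mid W=w]<\infty$ and $\mathbb{E}[\|X\|^2\mid W=w]<\infty$ for all $w\in\mathbb{W}$. Let $e_0(w)=\mathbb{E}[X\mid W=w]$ and $v_0(w)=\mathbb{V}(X\mid W=w)$, and assume (overlap) that there is $\kappa>0$ with $t'v_0(w)t\geq\kappa$ for all $w\in\mathbb{W}$ and all column vectors $t$ with $\|t\|=1$. Define $b_0(w)=v_0(w)^{-1}\mathbb{C}(X,Y\mid W=w)$ and $\beta_0=\mathbb{E}[b_0(W)]$. Suppose each unit has a potential response function $Y(x)=A+x'B$, where $A$ is a scalar and $B$ a $K\times1$ vector of unit-specific random coefficients, and the observed outcome is $Y=Y(X)$. Suppose further (conditional exogeneity) that for all $w\in\mathbb{W}$ and all $k,l=1,\ldots,K$, $$\mathbb{C}(A,X_k\mid W=w)=\mathbb{C}(B,X_k\mid W=w)=\mathbb{C}(B,X_kX_l\mid W=w)=0.$$ Then $\beta_0=\mathbb{E}[B]$.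
   Context: $\mathbb{C}(\cdot,\cdot\mid W=w)$ denotes conditional covariance and $\mathbb{V}(\cdot\mid W=w)$ conditional variance given $W=w$. *)

theory Defs
  imports "HOL-Probability.Probability"
begin

text \<open>Conditional moments given W = w are computed w.r.t. a regular conditional
  probability (disintegration) kappa of the underlying probability space M given W.\<close>

definition is_rcp :: "'a measure \<Rightarrow> ('a \<Rightarrow> 'w::topological_space) \<Rightarrow> ('w \<Rightarrow> 'a measure) \<Rightarrow> bool" where
  "is_rcp M W \<kappa> \<longleftrightarrow>
     \<kappa> \<in> borel \<rightarrow>\<^sub>M prob_algebra M \<and>
     (\<forall>E\<in>sets M. \<forall>S\<in>sets borel.
        emeasure M (E \<inter> W -` S \<inter> space M) = (\<integral>\<^sup>+ w\<in>S. emeasure (\<kappa> w) E \<partial>distr M borel W))"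

definition support_of :: "'a measure \<Rightarrow> ('a \<Rightarrow> 'w::metric_space) \<Rightarrow> 'w set" where
  "support_of M W = {w. \<forall>e>0. measure M (W -` ball w e \<inter> space M) > 0}"

definition cexp :: "('w \<Rightarrow> 'a measure) \<Rightarrow> ('a \<Rightarrow> real) \<Rightarrow> 'w \<Rightarrow> real" where
  "cexp \<kappa> f w = integral\<^sup>L (\<kappa> w) f"

definition ccov :: "('w \<Rightarrow> 'a measure) \<Rightarrow> ('a \<Rightarrow> real) \<Rightarrow> ('a \<Rightarrow> real) \<Rightarrow> 'w \<Rightarrow> real" where
  "ccov \<kappa> f g w = cexp \<kappa> (\<lambda>\<omega>. f \<omega> * g \<omega>) w - cexp \<kappa> f w * cexp \<kappa> g w"

definition ccov_zero :: "('w \<Rightarrow> 'a measure) \<Rightarrow> ('a \<Rightarrow> real) \<Rightarrow> ('a \<Rightarrow> real) \<Rightarrow> 'w \<Rightarrow> bool" where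
  "ccov_zero \<kappa> f g w \<longleftrightarrow> integrable (\<kappa> w) f \<and> integrable (\<kappa> w) g \<and>
     integrable (\<kappa> w) (\<lambda>\<omega>. f \<omega> * g \<omega>) \<and> ccov \<kappa> f g w = 0"

definition v0 :: "('w \<Rightarrow> 'a measure) \<Rightarrow> ('a \<Rightarrow> real^'k) \<Rightarrow> 'w \<Rightarrow> real^'k^'k" where
  "v0 \<kappa> X w = (\<chi> i j. ccov \<kappa> (\<lambda>\<omega>. X \<omega> $ i) (\<lambda>\<omega>. X \<omega> $ j) w)"

definition b0 :: "('w \<Rightarrow> 'a measure) \<Rightarrow> ('a \<Rightarrow> real^'k) \<Rightarrow> ('a \<Rightarrow> real) \<Rightarrow> 'w \<Rightarrow> real^'k" where
  "b0 \<kappa> X Y w = matrix_inv (v0 \<kappa> X w) *v (\<chi> k. ccov \<kappa> (\<lambda>\<omega>. X \<omega> $ k) Y w)"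

end

theory Submission
  imports Defs
begin

lemma tower_nonneg:
  fixes f :: "'a \<Rightarrow> real"
  assumes K: "K \<in> N \<rightarrow>\<^sub>M subprob_algebra M" and MN: "M = N \<bind> K"
    and f[measurable]: "f \<in> borel_measurable M" and nn: "\<And>x. x \<in> space M \<Longrightarrow> 0 \<le> f x"
    and int: "integrable M f"
  shows "(AE w in N. integrable (K w) f) \<and> integrable N (\<lambda>w. integral\<^sup>L (K w) f)
     \<and> integral\<^sup>L N (\<lambda>w. integral\<^sup>L (K w) f) = integral\<^sup>L M f"
proof -
  have sK: "w \<in> space N \<Longrightarrow> sets (K w) = sets M" for w
    using measurable_space[OF K] by (auto simp: space_subprob_algebra)
  have spK: "w \<in> space N \<Longrightarrow> space (K w) = space M" for w
    using sK sets_eq_imp_space_eq by blast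
  have gm: "(\<lambda>w. integral\<^sup>L (K w) f) \<in> borel_measurable N"
    using measurable_compose[OF K integral_measurable_subprob_algebra[OF f]] .
  have hm: "(\<lambda>w. \<integral>\<^sup>+y. ennreal (f y) \<partial>K w) \<in> borel_measurable N"
    using measurable_compose[OF K nn_integral_measurable_subprob_algebra[of "\<lambda>y. ennreal (f y)"]] by simp
  have eq1: "(\<integral>\<^sup>+x. ennreal (f x) \<partial>M) = (\<integral>\<^sup>+w. \<integral>\<^sup>+y. ennreal (f y) \<partial>K w \<partial>N)"
    by (subst MN, rule nn_integral_bind[OF _ K]) simp
  have eqM: "(\<integral>\<^sup>+x. ennreal (f x) \<partial>M) = ennreal (integral\<^sup>L M f)"
    using nn_integral_eq_integral[OF int] nn by auto
  have fin: "(\<integral>\<^sup>+w. \<integral>\<^sup>+y. ennreal (f y) \<partial>K w \<partial>N) \<noteq> \<infinity>"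
    using eq1[symmetric] eqM by simp
  have AEfin: "AE w in N. (\<integral>\<^sup>+y. ennreal (f y) \<partial>K w) \<noteq> \<infinity>"
    by (rule nn_integral_PInf_AE[OF hm fin])
  have AEint: "AE w in N. integrable (K w) f \<and> (\<integral>\<^sup>+y. ennreal (f y) \<partial>K w) = ennreal (integral\<^sup>L (K w) f)"
  proof (rule AE_mp[OF AEfin], rule AE_I2, rule impI)
    fix w assume w: "w \<in> space N" and fw: "(\<integral>\<^sup>+y. ennreal (f y) \<partial>K w) \<noteq> \<infinity>"
    have fK: "f \<in> borel_measurable (K w)"
      using f measurable_cong_sets[OF sK[OF w] refl] by blast
    have nK: "AE y in K w. 0 \<le> f y" using nn spK[OF w] by auto
    have iK: "integrable (K w) f"
      using integrableI_nonneg[OF fK nK] fw by (simp add: top.not_eq_extremum)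
    then show "integrable (K w) f \<and> (\<integral>\<^sup>+y. ennreal (f y) \<partial>K w) = ennreal (integral\<^sup>L (K w) f)"
      using nn_integral_eq_integral[OF iK nK] by simp
  qed
  have eq2: "(\<integral>\<^sup>+w. ennreal (integral\<^sup>L (K w) f) \<partial>N) = ennreal (integral\<^sup>L M f)"
  proof -
    have "(\<integral>\<^sup>+w. ennreal (integral\<^sup>L (K w) f) \<partial>N) = (\<integral>\<^sup>+w. \<integral>\<^sup>+y. ennreal (f y) \<partial>K w \<partial>N)"
      by (rule nn_integral_cong_AE) (use AEint in auto)
    then show ?thesis using eq1 eqM by simp
  qed
  have gnn: "AE w in N. 0 \<le> integral\<^sup>L (K w) f"
  proof (rule AE_I2)
    fix w assume "w \<in> space N"
    then show "0 \<le> integral\<^sup>L (K w) f" using nn spK by (intro integral_nonneg_AE AE_I2) auto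
  qed
  have "integrable N (\<lambda>w. integral\<^sup>L (K w) f) \<and> integral\<^sup>L N (\<lambda>w. integral\<^sup>L (K w) f) = integral\<^sup>L M f"
    using nn_integral_eq_integrable[OF gm gnn, of "integral\<^sup>L M f"] eq2 nn
    by (simp add: integral_nonneg)
  with AEint show ?thesis by auto
qed

lemma tower:
  fixes f :: "'a \<Rightarrow> real"
  assumes K: "K \<in> N \<rightarrow>\<^sub>M subprob_algebra M" and MN: "M = N \<bind> K"
    and f[measurable]: "f \<in> borel_measurable M"
    and int: "integrable M f"
  shows "(AE w in N. integrable (K w) f) \<and> integrable N (\<lambda>w. integral\<^sup>L (K w) f)
     \<and> integral\<^sup>L N (\<lambda>w. integral\<^sup>L (K w) f) = integral\<^sup>L M f"
proof -
  define fp where "fp x = max (f x) 0" for x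
  define fn where "fn x = max (- f x) 0" for x
  have [measurable]: "fp \<in> borel_measurable M" "fn \<in> borel_measurable M"
    unfolding fp_def fn_def by measurable
  have ip: "integrable M fp" and ineg: "integrable M fn" unfolding fp_def fn_def using int by auto
  have fpn: "f x = fp x - fn x" for x unfolding fp_def fn_def by auto
  note P = tower_nonneg[OF K MN _ _ ip] and Q = tower_nonneg[OF K MN _ _ ineg]
  have P': "(AE w in N. integrable (K w) fp) \<and> integrable N (\<lambda>w. integral\<^sup>L (K w) fp)
     \<and> integral\<^sup>L N (\<lambda>w. integral\<^sup>L (K w) fp) = integral\<^sup>L M fp"
    by (rule P) (auto simp: fp_def)
  have Q': "(AE w in N. integrable (K w) fn) \<and> integrable N (\<lambda>w. integral\<^sup>L (K w) fn)
     \<and> integral\<^sup>L N (\<lambda>w. integral\<^sup>L (K w) fn) = integral\<^sup>L M fn"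
    by (rule Q) (auto simp: fn_def)
  have fe: "f = (\<lambda>x. fp x - fn x)" using fpn by auto
  have AE1: "AE w in N. integrable (K w) f \<and> integral\<^sup>L (K w) f = integral\<^sup>L (K w) fp - integral\<^sup>L (K w) fn"
  proof -
    have "AE w in N. integrable (K w) fp \<and> integrable (K w) fn" using P' Q' by auto
    then show ?thesis by eventually_elim (auto simp: fe)
  qed
  have gm: "(\<lambda>w. integral\<^sup>L (K w) f) \<in> borel_measurable N"
    using measurable_compose[OF K integral_measurable_subprob_algebra[OF f]] .
  have dm: "(\<lambda>w. integral\<^sup>L (K w) fp - integral\<^sup>L (K w) fn) \<in> borel_measurable N"
    using P' Q' by auto
  have AE2: "AE w in N. integral\<^sup>L (K w) fp - integral\<^sup>L (K w) fn = integral\<^sup>L (K w) f"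
    using AE1 by auto
  have ig: "integrable N (\<lambda>w. integral\<^sup>L (K w) f)"
    using integrable_cong_AE_imp[OF _ gm AE2] P' Q' by auto
  have "integral\<^sup>L N (\<lambda>w. integral\<^sup>L (K w) f) = integral\<^sup>L N (\<lambda>w. integral\<^sup>L (K w) fp - integral\<^sup>L (K w) fn)"
    using integral_cong_AE[OF gm dm] AE1 by auto
  also have "\<dots> = integral\<^sup>L M fp - integral\<^sup>L M fn" using P' Q' by simp
  also have "\<dots> = integral\<^sup>L M f" using ip ineg by (simp add: fe)
  finally show ?thesis using AE1 ig by auto
qed
lemma support_AE:
  fixes W :: "'a \<Rightarrow> 'w::{metric_space, second_countable_topology}"
  assumes P: "prob_space M" and Wm: "W \<in> borel_measurable M"
  shows "AE x in M. W x \<in> support_of M W"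
proof -
  interpret prob_space M by (rule P)
  obtain B :: "'w set set" where cB: "countable B" and tB: "topological_basis B"
    using ex_countable_basis by blast
  define U where "U = {b\<in>B. W -` b \<inter> space M \<in> null_sets M}"
  have cU: "countable U" using cB unfolding U_def by auto
  have nU: "(\<Union>b\<in>U. W -` b \<inter> space M) \<in> null_sets M"
    by (rule null_sets_UN'[OF cU]) (auto simp: U_def)
  show ?thesis
  proof (rule AE_I'[OF nU], safe)
    fix x assume x: "x \<in> space M" and ns: "W x \<notin> support_of M W"
    then obtain e where e: "e > 0" and m: "\<not> measure M (W -` ball (W x) e \<inter> space M) > 0"
      unfolding support_of_def by auto
    have sb: "W -` ball (W x) e \<inter> space M \<in> sets M"
      using Wm by (auto intro: measurable_sets)
    have "measure M (W -` ball (W x) e \<inter> space M) = 0" using m measure_nonneg[of M "W -` ball (W x) e \<inter> space M"]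
      by linarith
    then have nb: "W -` ball (W x) e \<inter> space M \<in> null_sets M"
      using sb by (simp add: emeasure_eq_measure null_sets_def)
    obtain b where b: "b \<in> B" "W x \<in> b" "b \<subseteq> ball (W x) e"
      using topological_basisE[OF tB, of "ball (W x) e" "W x"] e by auto
    have "W -` b \<inter> space M \<in> sets M"
      using Wm topological_basis_open[OF tB b(1)] by (auto intro: measurable_sets)
    then have "W -` b \<inter> space M \<in> null_sets M"
      by (rule null_sets_subset[OF nb]) (use b in auto)
    then have "b \<in> U" using b unfolding U_def by auto
    then show "x \<in> (\<Union>b\<in>U. W -` b \<inter> space M)" using x b by auto
  qed
qed

lemma overlap_invertible:
  fixes V :: "real^'k^'k"
  assumes c: "c > 0" and ov: "\<And>t. norm t = 1 \<Longrightarrow> t \<bullet> (V *v t) \<ge> c"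
  shows "invertible V"
  unfolding invertible_left_inverse matrix_left_invertible_ker
proof (intro allI impI, rule ccontr)
  fix x assume x: "V *v x = 0" and nz: "x \<noteq> 0"
  define t where "t = (1 / norm x) *\<^sub>R x"
  have "norm t = 1" using nz unfolding t_def by simp
  moreover have "V *v t = 0" unfolding t_def by (simp add: matrix_vector_mult_scaleR x)
  ultimately show False using ov[of t] c by simp
qed

lemma matrix_inv_right:
  fixes V :: "real^'k^'k"
  assumes "invertible V" shows "V ** matrix_inv V = mat 1"
  using assms unfolding invertible_def matrix_inv_def by (rule someI_ex[where P="\<lambda>A'. V ** A' = mat 1 \<and> A' ** V = mat 1", THEN conjunct1])

lemma matrix_inv_left:
  fixes V :: "real^'k^'k"
  assumes "invertible V" shows "matrix_inv V ** V = mat 1"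
  using assms unfolding invertible_def matrix_inv_def by (rule someI_ex[where P="\<lambda>A'. V ** A' = mat 1 \<and> A' ** V = mat 1", THEN conjunct2])

lemma matrix_inv_noninv:
  fixes V :: "real^'k^'k"
  assumes "\<not> invertible V" shows "matrix_inv V = matrix_inv (0::real^'k^'k)"
proof -
  have n0: "\<not> invertible (0::real^'k^'k)"
    unfolding invertible_def by (auto simp: vec_eq_iff mat_def)
  have "(\<lambda>A'. V ** A' = mat 1 \<and> A' ** V = mat 1) = (\<lambda>A'. (0::real^'k^'k) ** A' = mat 1 \<and> A' ** 0 = mat 1)"
    using assms n0 unfolding invertible_def by auto
  then show ?thesis unfolding matrix_inv_def by simp
qed

lemma b_formula:
  fixes V :: "real^'k^'k" and y :: "real^'k"
  shows "(matrix_inv V *v y) $ i = (if det V \<noteq> 0 then det (\<chi> a b. if b = i then y $ a else V $ a $ b) / det V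
     else (matrix_inv (0::real^'k^'k) *v y) $ i)"
proof (cases "det V = 0")
  case True
  then have "\<not> invertible V" by (simp add: invertible_det_nz)
  then show ?thesis using True matrix_inv_noninv[OF \<open>\<not> invertible V\<close>] by simp
next
  case False
  then have iv: "invertible V" by (simp add: invertible_det_nz)
  have "V *v (matrix_inv V *v y) = y"
    by (simp add: matrix_vector_mul_assoc matrix_inv_right[OF iv])
  then have "matrix_inv V *v y = (\<chi> k. det(\<chi> i j. if j=k then y$i else V$i$j) / det V)"
    using cramer[OF False] by blast
  then show ?thesis using False by simp
qed

lemma ccov_XY:
  fixes X B :: "'a \<Rightarrow> real^'k" and A Y :: "'a \<Rightarrow> real" and \<kappa> :: "'w \<Rightarrow> 'a measure"
  assumes outcome: "\<And>\<omega>. Y \<omega> = A \<omega> + X \<omega> \<bullet> B \<omega>"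
    and exoA: "\<And>k. ccov_zero \<kappa> A (\<lambda>\<omega>. X \<omega> $ k) w"
    and exoB1: "\<And>m k. ccov_zero \<kappa> (\<lambda>\<omega>. B \<omega> $ m) (\<lambda>\<omega>. X \<omega> $ k) w"
    and exoB2: "\<And>m k l. ccov_zero \<kappa> (\<lambda>\<omega>. B \<omega> $ m) (\<lambda>\<omega>. X \<omega> $ k * X \<omega> $ l) w"
  shows "ccov \<kappa> (\<lambda>\<omega>. X \<omega> $ k) Y w = (\<Sum>l\<in>UNIV. v0 \<kappa> X w $ k $ l * cexp \<kappa> (\<lambda>\<omega>. B \<omega> $ l) w)"
proof -
  let ?P = "\<kappa> w"
  let ?c = "\<lambda>f. cexp \<kappa> f w"
  have iA: "integrable ?P A" using exoA unfolding ccov_zero_def by blast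
  have iAX: "integrable ?P (\<lambda>\<omega>. A \<omega> * X \<omega> $ k)" using exoA unfolding ccov_zero_def by blast
  have cAX: "?c (\<lambda>\<omega>. A \<omega> * X \<omega> $ k) = ?c A * ?c (\<lambda>\<omega>. X \<omega> $ k)"
    using exoA[of k] unfolding ccov_zero_def ccov_def by simp
  have iBXX: "integrable ?P (\<lambda>\<omega>. B \<omega> $ l * (X \<omega> $ k * X \<omega> $ l))" for l
    using exoB2 unfolding ccov_zero_def by blast
  have cBXX: "?c (\<lambda>\<omega>. B \<omega> $ l * (X \<omega> $ k * X \<omega> $ l)) = ?c (\<lambda>\<omega>. B \<omega> $ l) * ?c (\<lambda>\<omega>. X \<omega> $ k * X \<omega> $ l)" for l
    using exoB2[of l k l] unfolding ccov_zero_def ccov_def by simp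
  have iBX: "integrable ?P (\<lambda>\<omega>. B \<omega> $ l * X \<omega> $ l)" for l
    using exoB1 unfolding ccov_zero_def by blast
  have cBX: "?c (\<lambda>\<omega>. B \<omega> $ l * X \<omega> $ l) = ?c (\<lambda>\<omega>. B \<omega> $ l) * ?c (\<lambda>\<omega>. X \<omega> $ l)" for l
    using exoB1[of l l] unfolding ccov_zero_def ccov_def by simp
  have Y1: "(\<lambda>\<omega>. X \<omega> $ k * Y \<omega>) = (\<lambda>\<omega>. A \<omega> * X \<omega> $ k + (\<Sum>l\<in>UNIV. B \<omega> $ l * (X \<omega> $ k * X \<omega> $ l)))"
    by (auto simp: outcome inner_vec_def distrib_left sum_distrib_left algebra_simps intro!: sum.cong)
  have Y2: "Y = (\<lambda>\<omega>. A \<omega> + (\<Sum>l\<in>UNIV. B \<omega> $ l * X \<omega> $ l))"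
    by (auto simp: outcome inner_vec_def algebra_simps)
  have e1: "?c (\<lambda>\<omega>. X \<omega> $ k * Y \<omega>) = ?c A * ?c (\<lambda>\<omega>. X \<omega> $ k) + (\<Sum>l\<in>UNIV. ?c (\<lambda>\<omega>. B \<omega> $ l) * ?c (\<lambda>\<omega>. X \<omega> $ k * X \<omega> $ l))"
    unfolding Y1 using iAX iBXX cAX cBXX
    by (simp add: cexp_def integral_add integral_sum integrable_sum)
  have e2: "?c Y = ?c A + (\<Sum>l\<in>UNIV. ?c (\<lambda>\<omega>. B \<omega> $ l) * ?c (\<lambda>\<omega>. X \<omega> $ l))"
    unfolding Y2 using iA iBX cBX
    by (simp add: cexp_def integral_add integral_sum integrable_sum)
  show ?thesis
    unfolding ccov_def e1 e2 v0_def
    by (simp add: algebra_simps sum_distrib_left sum_subtractf)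
qed

lemma b0_measurable:
  fixes X :: "'a \<Rightarrow> real^'k" and Y :: "'a \<Rightarrow> real" and \<kappa> :: "real^'j \<Rightarrow> 'a measure"
  assumes Ksub: "\<kappa> \<in> borel \<rightarrow>\<^sub>M subprob_algebra M"
   and [measurable]: "X \<in> borel_measurable M" "Y \<in> borel_measurable M"
  shows "(\<lambda>w. b0 \<kappa> X Y w $ i) \<in> borel_measurable borel"
proof -
  have [measurable]: "(\<lambda>x. X x $ a) \<in> borel_measurable M" for a
    using measurable_compose[OF assms(2) borel_measurable_nth] .
  have cm: "(\<lambda>w. cexp \<kappa> f w) \<in> borel_measurable borel" if "f \<in> borel_measurable M" for f
    unfolding cexp_def using measurable_compose[OF Ksub integral_measurable_subprob_algebra[OF that]] .
  have [measurable]: "(\<lambda>w. cexp \<kappa> (\<lambda>\<omega>. X \<omega> $ a * X \<omega> $ b) w) \<in> borel_measurable borel" for a b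
    by (rule cm) measurable
  have [measurable]: "(\<lambda>w. cexp \<kappa> (\<lambda>\<omega>. X \<omega> $ a * Y \<omega>) w) \<in> borel_measurable borel" for a
    by (rule cm) measurable
  have [measurable]: "(\<lambda>w. cexp \<kappa> (\<lambda>\<omega>. X \<omega> $ a) w) \<in> borel_measurable borel" for a
    by (rule cm) measurable
  have [measurable]: "(\<lambda>w. cexp \<kappa> Y w) \<in> borel_measurable borel"
    by (rule cm) measurable
    define cc where "cc w = (\<chi> k. ccov \<kappa> (\<lambda>\<omega>. X \<omega> $ k) Y w)" for w
    have v0m[measurable]: "(\<lambda>w. v0 \<kappa> X w $ a $ b) \<in> borel_measurable borel" for a b
      unfolding v0_def vec_lambda_beta ccov_def by measurable
    have ccm[measurable]: "(\<lambda>w. cc w $ a) \<in> borel_measurable borel" for a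
      unfolding cc_def vec_lambda_beta ccov_def by measurable
    have eq: "b0 \<kappa> X Y w $ i = (if det (v0 \<kappa> X w) \<noteq> 0 then det (\<chi> a b. if b = i then cc w $ a else v0 \<kappa> X w $ a $ b) / det (v0 \<kappa> X w)
     else (matrix_inv (0::real^'k^'k) *v cc w) $ i)" for w
      unfolding b0_def cc_def by (rule b_formula)
    have [measurable]: "(\<lambda>w. det (v0 \<kappa> X w)) \<in> borel_measurable borel" unfolding det_def by measurable
    have [measurable]: "(\<lambda>w. det (\<chi> a b. if b = i then cc w $ a else v0 \<kappa> X w $ a $ b)) \<in> borel_measurable borel"
      unfolding det_def vec_lambda_beta by measurable
    have [measurable]: "(\<lambda>w. (matrix_inv (0::real^'k^'k) *v cc w) $ i) \<in> borel_measurable borel"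
      unfolding matrix_vector_mult_def vec_lambda_beta by measurable
    show ?thesis unfolding eq by measurable
qed

lemma integrable_nth: fixes f :: "'a \<Rightarrow> real^'k" assumes "integrable M f"
  shows "integrable M (\<lambda>x. f x $ i)"
  using integrable_inner_left[of "axis i 1" M f] assms by (simp add: inner_axis)
lemma integral_nth: fixes f :: "'a \<Rightarrow> real^'k" assumes "integrable M f"
  shows "integral\<^sup>L M (\<lambda>x. f x $ i) = integral\<^sup>L M f $ i"
  using integral_inner_left[of "axis i 1" M f] assms by (simp add: inner_axis)
lemma vec_measurable_components:
  fixes f :: "'w \<Rightarrow> real^'k"
  assumes "\<And>i. (\<lambda>w. f w $ i) \<in> borel_measurable M"
  shows "f \<in> borel_measurable M"
proof (rule borel_measurable_euclidean_space[THEN iffD2], intro ballI)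
  fix v :: "real^'k" assume "v \<in> Basis"
  then obtain i where v: "v = axis i 1" unfolding Basis_vec_def by auto
  have "(\<lambda>x. f x \<bullet> axis i 1) = (\<lambda>x. f x $ i)" by (simp add: inner_axis)
  then show "(\<lambda>x. f x \<bullet> v) \<in> borel_measurable M" using assms[of i] v by simp
qed

theorem proposition1:
  fixes M :: "'a measure"
    and W :: "'a \<Rightarrow> real^'j"
    and X B :: "'a \<Rightarrow> real^'k"
    and A Y :: "'a \<Rightarrow> real"
    and \<kappa> :: "real^'j \<Rightarrow> 'a measure"
    and c :: real
  assumes "prob_space M"
    and "W \<in> borel_measurable M" and "X \<in> borel_measurable M" and "B \<in> borel_measurable M"
    and "A \<in> borel_measurable M"
    and rcp: "is_rcp M W \<kappa>"
    and outcome: "\<And>\<omega>. Y \<omega> = A \<omega> + X \<omega> \<bullet> B \<omega>"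
    and momY: "\<And>w. w \<in> support_of M W \<Longrightarrow> integrable (\<kappa> w) (\<lambda>\<omega>. (Y \<omega>)\<^sup>2)"
    and momX: "\<And>w. w \<in> support_of M W \<Longrightarrow> integrable (\<kappa> w) (\<lambda>\<omega>. (norm (X \<omega>))\<^sup>2)"
    and overlap_pos: "c > 0"
    and overlap: "\<And>w t. w \<in> support_of M W \<Longrightarrow> norm t = 1 \<Longrightarrow> t \<bullet> (v0 \<kappa> X w *v t) \<ge> c"
    and exoA: "\<And>w k. w \<in> support_of M W \<Longrightarrow> ccov_zero \<kappa> A (\<lambda>\<omega>. X \<omega> $ k) w"
    and exoB1: "\<And>w m k. w \<in> support_of M W \<Longrightarrow> ccov_zero \<kappa> (\<lambda>\<omega>. B \<omega> $ m) (\<lambda>\<omega>. X \<omega> $ k) w"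
    and exoB2: "\<And>w m k l. w \<in> support_of M W \<Longrightarrow>
                   ccov_zero \<kappa> (\<lambda>\<omega>. B \<omega> $ m) (\<lambda>\<omega>. X \<omega> $ k * X \<omega> $ l) w"
    and intB: "integrable M B"
  shows "integral\<^sup>L M (\<lambda>\<omega>. b0 \<kappa> X Y (W \<omega>)) = integral\<^sup>L M B"
proof -
  interpret P: prob_space M by fact
  note [measurable] = \<open>W \<in> borel_measurable M\<close> \<open>X \<in> borel_measurable M\<close> \<open>B \<in> borel_measurable M\<close>
    \<open>A \<in> borel_measurable M\<close>
  have Yeq: "Y = (\<lambda>\<omega>. A \<omega> + X \<omega> \<bullet> B \<omega>)" using outcome by auto
  have Ym[measurable]: "Y \<in> borel_measurable M"
    unfolding Yeq by measurable
  define N where "N = distr M borel W"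
  have sN: "sets N = sets borel" unfolding N_def by simp
  have spN: "space N = UNIV" unfolding N_def by simp
  have Kb: "\<kappa> \<in> borel \<rightarrow>\<^sub>M prob_algebra M" using rcp unfolding is_rcp_def by blast
  have Ksub: "\<kappa> \<in> borel \<rightarrow>\<^sub>M subprob_algebra M" using measurable_prob_algebraD[OF Kb] .
  have K: "\<kappa> \<in> N \<rightarrow>\<^sub>M subprob_algebra M"
    unfolding measurable_cong_sets[OF sN refl] by (rule Ksub)
  have sK: "sets (\<kappa> w) = sets M" for w
    using measurable_space[OF Kb, of w] by (simp add: space_prob_algebra)
  have MN: "M = N \<bind> \<kappa>"
  proof (rule measure_eqI)
    show "sets M = sets (N \<bind> \<kappa>)" using sK spN by (subst sets_bind) auto
  next
    fix E assume E: "E \<in> sets M"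
    have "emeasure M (E \<inter> W -` UNIV \<inter> space M) = (\<integral>\<^sup>+ w\<in>UNIV. emeasure (\<kappa> w) E \<partial>N)"
    proof -
      have U: "UNIV \<in> sets (borel :: (real^'j) measure)" by simp
      show ?thesis using rcp E U unfolding is_rcp_def N_def by blast
    qed
    moreover have "E \<inter> W -` UNIV \<inter> space M = E" using sets.sets_into_space[OF E] by auto
    ultimately have "emeasure M E = (\<integral>\<^sup>+ w. emeasure (\<kappa> w) E \<partial>N)" by simp
    also have "\<dots> = emeasure (N \<bind> \<kappa>) E"
      using emeasure_bind[OF _ K E] spN by simp
    finally show "emeasure M E = emeasure (N \<bind> \<kappa>) E" .
  qed
  have cm: "(\<lambda>w. cexp \<kappa> f w) \<in> borel_measurable borel" if "f \<in> borel_measurable M" for f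
    unfolding cexp_def using measurable_compose[OF Ksub integral_measurable_subprob_algebra[OF that]] .
  define \<beta> where "\<beta> w = (\<chi> m. cexp \<kappa> (\<lambda>\<omega>. B \<omega> $ m) w)" for w
  have b0eq: "b0 \<kappa> X Y w = \<beta> w" if w: "w \<in> support_of M W" for w
  proof -
    have iv: "invertible (v0 \<kappa> X w)"
      by (rule overlap_invertible[OF overlap_pos overlap[OF w]])
    have cc: "(\<chi> k. ccov \<kappa> (\<lambda>\<omega>. X \<omega> $ k) Y w) = v0 \<kappa> X w *v \<beta> w"
      using ccov_XY[OF outcome exoA[OF w] exoB1[OF w] exoB2[OF w]]
      by (simp add: vec_eq_iff matrix_vector_mult_def \<beta>_def)
    have "b0 \<kappa> X Y w = matrix_inv (v0 \<kappa> X w) *v (v0 \<kappa> X w *v \<beta> w)"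
      unfolding b0_def cc ..
    also have "\<dots> = (matrix_inv (v0 \<kappa> X w) ** v0 \<kappa> X w) *v \<beta> w"
      by (rule matrix_vector_mul_assoc)
    also have "\<dots> = \<beta> w" by (simp only: matrix_inv_left[OF iv] matrix_vector_mul_lid)
    finally show ?thesis .
  qed
  have b0m: "(\<lambda>w. b0 \<kappa> X Y w $ i) \<in> borel_measurable borel" for i
    by (rule b0_measurable[OF Ksub \<open>X \<in> borel_measurable M\<close> Ym])
  have Gm: "(\<lambda>\<omega>. b0 \<kappa> X Y (W \<omega>)) \<in> borel_measurable M"
  proof -
    have "(\<lambda>w. b0 \<kappa> X Y w) \<in> borel_measurable borel"
      by (rule vec_measurable_components[OF b0m])
    from measurable_compose[OF \<open>W \<in> borel_measurable M\<close> this] show ?thesis .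
  qed
  have iBm: "integrable M (\<lambda>\<omega>. B \<omega> $ m)" for m
    by (rule integrable_nth[OF intB])
  have Bmm[measurable]: "(\<lambda>\<omega>. B \<omega> $ m) \<in> borel_measurable M" for m
    using measurable_compose[OF \<open>B \<in> borel_measurable M\<close> borel_measurable_nth] .
  have cBW[measurable]: "(\<lambda>\<omega>. cexp \<kappa> (\<lambda>\<omega>. B \<omega> $ m) (W \<omega>)) \<in> borel_measurable M" for m
    using measurable_compose[OF \<open>W \<in> borel_measurable M\<close> cm[OF Bmm]] .
  have tw: "integrable M (\<lambda>\<omega>. cexp \<kappa> (\<lambda>\<omega>. B \<omega> $ m) (W \<omega>))
      \<and> integral\<^sup>L M (\<lambda>\<omega>. cexp \<kappa> (\<lambda>\<omega>. B \<omega> $ m) (W \<omega>)) = integral\<^sup>L M (\<lambda>\<omega>. B \<omega> $ m)" for m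
  proof -
    have T: "integrable N (\<lambda>w. cexp \<kappa> (\<lambda>\<omega>. B \<omega> $ m) w)
      \<and> integral\<^sup>L N (\<lambda>w. cexp \<kappa> (\<lambda>\<omega>. B \<omega> $ m) w) = integral\<^sup>L M (\<lambda>\<omega>. B \<omega> $ m)"
      using tower[OF K MN Bmm iBm] unfolding cexp_def by blast
    have e1: "integrable (distr M borel W) (cexp \<kappa> (\<lambda>\<omega>. B \<omega> $ m)) \<longleftrightarrow> integrable M (\<lambda>\<omega>. cexp \<kappa> (\<lambda>\<omega>. B \<omega> $ m) (W \<omega>))"
      by (rule integrable_distr_eq[OF \<open>W \<in> borel_measurable M\<close> cm[OF Bmm]])
    have e2: "integral\<^sup>L (distr M borel W) (cexp \<kappa> (\<lambda>\<omega>. B \<omega> $ m)) = integral\<^sup>L M (\<lambda>\<omega>. cexp \<kappa> (\<lambda>\<omega>. B \<omega> $ m) (W \<omega>))"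
      by (rule integral_distr[OF \<open>W \<in> borel_measurable M\<close> cm[OF Bmm]])
    show ?thesis
      using T e1 e2 unfolding N_def by simp
  qed
  have AEs: "AE \<omega> in M. W \<omega> \<in> support_of M W"
    by (rule support_AE) (simp_all add: \<open>prob_space M\<close>)
  define H where "H \<omega> = (\<Sum>m\<in>UNIV. cexp \<kappa> (\<lambda>\<omega>. B \<omega> $ m) (W \<omega>) *\<^sub>R axis m (1::real))" for \<omega>
  have Hm: "H \<in> borel_measurable M" unfolding H_def by measurable
  have iH: "integrable M H" unfolding H_def using tw by auto
  have GH: "AE \<omega> in M. H \<omega> = b0 \<kappa> X Y (W \<omega>)"
    using AEs
  proof eventually_elim
    case (elim \<omega>)
    have "H \<omega> = \<beta> (W \<omega>)"
      unfolding H_def \<beta>_def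
      by (simp add: vec_eq_iff axis_def if_distrib cong: if_cong)
    then show ?case using b0eq[OF elim] by simp
  qed
  have iG: "integrable M (\<lambda>\<omega>. b0 \<kappa> X Y (W \<omega>))"
    by (rule integrable_cong_AE_imp[OF iH Gm GH])
  show ?thesis
  proof (subst vec_eq_iff, intro allI)
    fix m
    have "integral\<^sup>L M (\<lambda>\<omega>. b0 \<kappa> X Y (W \<omega>)) $ m = integral\<^sup>L M (\<lambda>\<omega>. b0 \<kappa> X Y (W \<omega>) $ m)"
      by (rule integral_nth[OF iG, symmetric])
    also have "\<dots> = integral\<^sup>L M (\<lambda>\<omega>. cexp \<kappa> (\<lambda>\<omega>. B \<omega> $ m) (W \<omega>))"
    proof (rule integral_cong_AE)
      show "(\<lambda>\<omega>. b0 \<kappa> X Y (W \<omega>) $ m) \<in> borel_measurable M" using measurable_compose[OF Gm borel_measurable_nth] .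
      show "(\<lambda>\<omega>. cexp \<kappa> (\<lambda>\<omega>. B \<omega> $ m) (W \<omega>)) \<in> borel_measurable M" by (rule cBW)
      show "AE \<omega> in M. b0 \<kappa> X Y (W \<omega>) $ m = cexp \<kappa> (\<lambda>\<omega>. B \<omega> $ m) (W \<omega>)"
        using AEs by eventually_elim (simp add: b0eq \<beta>_def)
    qed
    also have "\<dots> = integral\<^sup>L M (\<lambda>\<omega>. B \<omega> $ m)" using tw by blast
    also have "\<dots> = integral\<^sup>L M B $ m"
      by (rule integral_nth[OF intB])
    finally show "integral\<^sup>L M (\<lambda>\<omega>. b0 \<kappa> X Y (W \<omega>)) $ m = integral\<^sup>L M B $ m" .
  qed
qed

end
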